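(* Let $I$ be an interval and let $a(t,x)$, $\eta(t,x)$ be real functions on $I\times\mathbf{R}^d$ with $\nabla\eta\in L^\infty(I\times\mathbf{R}^d)$, $a\in L^\infty(I\times\mathbf{R}^d)$ and $a\ge c>0$. Set $\mathcal U(t,x,\xi)=(1+|\nabla\eta|^2)|\xi|^2-(\xi\cdot\nabla\eta)^2$ and $\gamma=(a^2\mathcal U)^{1/4}$. Then there exists $c_0>0$ such that $|\det\operatorname{Hess}_\xi\gamma(t,x,\xi)|\ge c_0$ for all $t\in I$, $x\in\mathbf{R}^d$, $\xi\in\mathcal C_0=\{\frac12\le|\xi|\le2\}$.
   Context: $\operatorname{Hess}_\xi\gamma=\big(\partial^2\gamma/\partial\xi_j\partial\xi_k\big)_{j,k}$. *)

theory Defs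
  imports "HOL-Analysis.Analysis"
begin

definition partial_deriv :: "'d::finite \<Rightarrow> (real^'d \<Rightarrow> real) \<Rightarrow> real^'d \<Rightarrow> real" where
  "partial_deriv j f \<xi> = deriv (\<lambda>s. f (\<xi> + s *\<^sub>R axis j 1)) 0"

definition hessian :: "(real^'d::finite \<Rightarrow> real) \<Rightarrow> real^'d \<Rightarrow> real^'d^'d" where
  "hessian f \<xi> = (\<chi> j k. partial_deriv j (partial_deriv k f) \<xi>)"

definition grad :: "(real^'d::finite \<Rightarrow> real) \<Rightarrow> real^'d \<Rightarrow> real^'d" where
  "grad f x = (\<chi> i. partial_deriv i f x)"

definition U_sym :: "(real \<Rightarrow> real^'d::finite \<Rightarrow> real) \<Rightarrow> real \<Rightarrow> real^'d \<Rightarrow> real^'d \<Rightarrow> real" where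
  "U_sym \<eta> t x \<xi> = (1 + (norm (grad (\<eta> t) x))\<^sup>2) * (norm \<xi>)\<^sup>2 - (\<xi> \<bullet> grad (\<eta> t) x)\<^sup>2"

definition gamma_sym :: "(real \<Rightarrow> real^'d::finite \<Rightarrow> real) \<Rightarrow> (real \<Rightarrow> real^'d \<Rightarrow> real)
     \<Rightarrow> real \<Rightarrow> real^'d \<Rightarrow> real^'d \<Rightarrow> real" where
  "gamma_sym a \<eta> t x \<xi> = ((a t x)\<^sup>2 * U_sym \<eta> t x \<xi>) powr (1/4)"

end

theory Submission imports Defs begin

definition outer :: "real^'n \<Rightarrow> real^'n \<Rightarrow> real^'n^'n::finite" where
  "outer u w = (\<chi> i j. u$i * w$j)"

lemma det_row_replace_id:
  fixes w :: "real^'n::finite"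
  shows "det (\<chi> i. if i = z then w else axis i 1) = w$z"
proof -
  have w: "w = (\<Sum>j\<in>UNIV. (w$j) *s axis j 1)"
    by (simp add: vec_eq_iff sum_component axis_def if_distrib sum.delta cong: if_cong)
  have "det (\<chi> i. if i = z then w else axis i 1) =
        det (\<chi> i. if i = z then (\<Sum>j\<in>UNIV. (\<lambda>i j. (w$j) *s axis j (1::real)) i j) else axis i 1)"
    by (subst w) simp
  also have "\<dots> = (\<Sum>j\<in>UNIV. det ((\<chi> i. if i = z then (w$j) *s axis j 1 else axis i 1)::real^'n^'n))"
    by (rule det_linear_row_sum) simp
  also have "\<dots> = (\<Sum>j\<in>UNIV. w$j * det ((\<chi> i. if i = z then axis j 1 else axis i 1)::real^'n^'n))"
    by (simp add: det_row_mul)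
  also have "\<dots> = (\<Sum>j\<in>UNIV. if j = z then w$j else 0)"
  proof (rule sum.cong)
    fix j :: 'n
    show "w$j * det ((\<chi> i. if i = z then axis j 1 else axis i 1)::real^'n^'n) = (if j = z then w$j else 0)"
    proof (cases "j = z")
      case True
      have "((\<chi> i. if i = z then axis j 1 else axis i 1)::real^'n^'n) = mat 1"
        using True by (simp add: vec_eq_iff mat_def axis_def)
      then show ?thesis using True by simp
    next
      case False
      have "det ((\<chi> i. if i = z then axis j 1 else axis i 1)::real^'n^'n) = 0"
        by (rule det_identical_rows[of z j]) (use False in \<open>auto simp: row_def vec_eq_iff\<close>)
      then show ?thesis using False by simp
    qed
  qed simp
  also have "\<dots> = w$z" by simp
  finally show ?thesis .
qed

lemma det_E:
  fixes w u :: "real^'n::finite"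
  assumes "finite T" "z \<notin> T"
  shows "det (\<chi> i. if i = z then w else if i \<in> T then axis i 1 + u$i *s w else axis i 1) = w$z"
  using assms
proof (induction T rule: finite_induct)
  case empty
  have "((\<chi> i. if i = z then w else if i \<in> {} then axis i 1 + u$i *s w else axis i 1)::real^'n^'n) = (\<chi> i. if i = z then w else axis i 1)"
    by (simp add: vec_eq_iff)
  then show ?case using det_row_replace_id[of z w] by simp
next
  case (insert y T)
  let ?A = "(\<chi> i. if i = z then w else if i \<in> T then axis i 1 + u$i *s w else axis i 1)::real^'n^'n"
  have yz: "y \<noteq> z" using insert by auto
  have "det (\<chi> k. if k = y then row y ?A + (u$y) *s row z ?A else row k ?A) = det ?A"
    by (rule det_row_operation) (rule yz)
  moreover have "(\<chi> k. if k = y then row y ?A + (u$y) *s row z ?A else row k ?A) =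
     (\<chi> i. if i = z then w else if i \<in> insert y T then axis i 1 + u$i *s w else axis i 1)"
    using insert yz by (auto simp: vec_eq_iff row_def)
  ultimately show ?case using insert by simp
qed

lemma det_D:
  fixes w u :: "real^'n::finite"
  assumes "finite T"
  shows "det (\<chi> i. if i \<in> T then axis i 1 + u$i *s w else axis i 1) = 1 + (\<Sum>i\<in>T. u$i * w$i)"
  using assms
proof (induction T rule: finite_induct)
  case empty
  have "((\<chi> i. axis i 1)::real^'n^'n) = mat 1"
    by (simp add: vec_eq_iff mat_def axis_def)
  then show ?case by simp
next
  case (insert z T)
  let ?c = "\<lambda>i. if i \<in> T then axis i 1 + u$i *s w else (axis i 1 :: real^'n)"
  have "((\<chi> i. if i \<in> insert z T then axis i 1 + u$i *s w else axis i 1)::real^'n^'n) =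
        (\<chi> i. if i = z then axis i 1 + u$i *s w else ?c i)" by (auto simp: vec_eq_iff)
  then have "det ((\<chi> i. if i \<in> insert z T then axis i 1 + u$i *s w else axis i 1)::real^'n^'n) =
      det ((\<chi> i. if i = z then axis i 1 else ?c i)::real^'n^'n) + det ((\<chi> i. if i = z then u$i *s w else ?c i)::real^'n^'n)"
    using det_row_add[of z "\<lambda>i. axis i 1" "\<lambda>i. u$i *s w" ?c] by simp
  also have "((\<chi> i. if i = z then axis i 1 else ?c i)::real^'n^'n) = (\<chi> i. if i \<in> T then axis i 1 + u$i *s w else axis i 1)"
    using insert by (auto simp: vec_eq_iff)
  also have "det ((\<chi> i. if i = z then u$i *s w else ?c i)::real^'n^'n) = u$z * det ((\<chi> i. if i = z then w else ?c i)::real^'n^'n)"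
    using det_row_mul[of z "u$z" "\<lambda>i. w" ?c] by (simp cong: if_cong)
  also have "det ((\<chi> i. if i = z then w else ?c i)::real^'n^'n) = w$z"
    using det_E[OF insert(1) insert(2), of w u] by simp
  finally show ?case using insert by (simp add: algebra_simps)
qed

lemma det_rank_one:
  fixes u w :: "real^'n::finite"
  shows "det (mat 1 + outer u w) = 1 + u \<bullet> w"
proof -
  have "mat 1 + outer u w = (\<chi> i. if i \<in> UNIV then axis i 1 + u$i *s w else axis i 1)"
    by (simp add: vec_eq_iff outer_def mat_def axis_def)
  then show ?thesis using det_D[where T=UNIV and u=u and w=w] by (simp add: inner_vec_def)
qed


definition qf :: "real \<Rightarrow> real^'n::finite \<Rightarrow> real^'n \<Rightarrow> real" where
  "qf \<alpha> g \<xi> = \<alpha>\<^sup>2 * ((1 + (norm g)\<^sup>2) * (norm \<xi>)\<^sup>2 - (\<xi> \<bullet> g)\<^sup>2)"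

definition pv :: "real \<Rightarrow> real^'n::finite \<Rightarrow> real^'n \<Rightarrow> real^'n" where
  "pv \<alpha> g \<xi> = \<alpha>\<^sup>2 *\<^sub>R ((1 + (norm g)\<^sup>2) *\<^sub>R \<xi> - (\<xi> \<bullet> g) *\<^sub>R g)"

lemma qf_line: "qf \<alpha> g (\<xi> + s *\<^sub>R e) = qf \<alpha> g \<xi> + 2 * s * (pv \<alpha> g \<xi> \<bullet> e) + s\<^sup>2 * qf \<alpha> g e"
  unfolding qf_def pv_def power2_norm_eq_inner
  by (simp add: inner_add_left inner_add_right
      inner_diff_left algebra_simps power2_eq_square inner_commute)

lemma pv_line: "pv \<alpha> g (\<xi> + s *\<^sub>R e) = pv \<alpha> g \<xi> + s *\<^sub>R pv \<alpha> g e"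
  by (simp add: pv_def inner_add_left algebra_simps)

lemma qf_inner: "qf \<alpha> g \<xi> = \<xi> \<bullet> pv \<alpha> g \<xi>"
  unfolding qf_def pv_def power2_norm_eq_inner
  by (simp add: inner_diff_right algebra_simps power2_eq_square inner_commute)

lemma qf_lower: "qf \<alpha> g \<xi> \<ge> \<alpha>\<^sup>2 * (norm \<xi>)\<^sup>2"
proof -
  have "(\<xi> \<bullet> g)\<^sup>2 \<le> (norm \<xi>)\<^sup>2 * (norm g)\<^sup>2"
    using Cauchy_Schwarz_ineq[of \<xi> g] by (simp add: power2_norm_eq_inner)
  then have "(1 + (norm g)\<^sup>2) * (norm \<xi>)\<^sup>2 - (\<xi> \<bullet> g)\<^sup>2 \<ge> (norm \<xi>)\<^sup>2"
    by (simp add: algebra_simps)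
  then show ?thesis unfolding qf_def by (simp add: mult_left_mono)
qed

lemma qf_pos: "\<xi> \<noteq> 0 \<Longrightarrow> \<alpha> \<noteq> 0 \<Longrightarrow> qf \<alpha> g \<xi> > 0"
  using qf_lower[of \<alpha> \<xi> g] by (smt (verit) mult_pos_pos norm_eq_zero zero_less_power2)

lemma qf_line_deriv:
  "((\<lambda>s. qf \<alpha> g (\<xi> + s *\<^sub>R e)) has_real_derivative 2 * (pv \<alpha> g \<xi> \<bullet> e)) (at 0)"
proof -
  have "((\<lambda>s. qf \<alpha> g \<xi> + 2 * s * (pv \<alpha> g \<xi> \<bullet> e) + s\<^sup>2 * qf \<alpha> g e) has_real_derivative 2 * (pv \<alpha> g \<xi> \<bullet> e)) (at 0)"
    by (auto intro!: derivative_eq_intros)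
  then show ?thesis by (simp add: qf_line)
qed

lemma pv_line_deriv:
  "((\<lambda>s. pv \<alpha> g (\<xi> + s *\<^sub>R e) $ k) has_real_derivative pv \<alpha> g e $ k) (at 0)"
proof -
  have "((\<lambda>s. pv \<alpha> g \<xi> $ k + s * pv \<alpha> g e $ k) has_real_derivative pv \<alpha> g e $ k) (at 0)"
    by (auto intro!: derivative_eq_intros)
  then show ?thesis by (simp add: pv_line)
qed

lemma pd1:
  assumes "\<xi> \<noteq> 0" "\<alpha> \<noteq> 0"
  shows "partial_deriv k (\<lambda>\<xi>. qf \<alpha> g \<xi> powr (1/4)) \<xi> = (1/2) * qf \<alpha> g \<xi> powr (-3/4) * pv \<alpha> g \<xi> $ k"
proof -
  have p: "qf \<alpha> g (\<xi> + 0 *\<^sub>R axis k 1) > 0" using qf_pos[OF assms] by simp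
  have "((\<lambda>s. qf \<alpha> g (\<xi> + s *\<^sub>R axis k 1) powr (1/4)) has_real_derivative
     (1/4) * qf \<alpha> g (\<xi> + 0 *\<^sub>R axis k 1) powr (1/4 - of_nat 1) * (2 * (pv \<alpha> g \<xi> \<bullet> axis k 1))) (at 0)"
    by (rule DERIV_fun_powr[OF qf_line_deriv p])
  then show ?thesis unfolding partial_deriv_def
    by (intro DERIV_imp_deriv) (simp add: inner_axis mult_ac)
qed

lemma pd2:
  fixes \<xi> :: "real^'n::finite"
  assumes "\<xi> \<noteq> 0" "\<alpha> \<noteq> 0"
  shows "partial_deriv j (partial_deriv k (\<lambda>\<xi>. qf \<alpha> g \<xi> powr (1/4))) \<xi> =
    (1/2) * (-(3/2) * qf \<alpha> g \<xi> powr (-7/4) * pv \<alpha> g \<xi> $ j * pv \<alpha> g \<xi> $ k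
             + qf \<alpha> g \<xi> powr (-3/4) * pv \<alpha> g (axis j 1) $ k)"
proof -
  let ?e = "axis j 1 :: real^'n"
  have p: "qf \<alpha> g (\<xi> + 0 *\<^sub>R ?e) > 0" using qf_pos[OF assms] by simp
  have d1: "((\<lambda>s. qf \<alpha> g (\<xi> + s *\<^sub>R ?e) powr (-3/4)) has_real_derivative
     (-3/4) * qf \<alpha> g (\<xi> + 0 *\<^sub>R ?e) powr (-3/4 - of_nat 1) * (2 * (pv \<alpha> g \<xi> \<bullet> ?e))) (at 0)"
    by (rule DERIV_fun_powr[OF qf_line_deriv p])
  have d2: "((\<lambda>s. (1/2) * qf \<alpha> g (\<xi> + s *\<^sub>R ?e) powr (-3/4) * pv \<alpha> g (\<xi> + s *\<^sub>R ?e) $ k) has_real_derivative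
     (1/2) * ((-3/4) * qf \<alpha> g (\<xi> + 0 *\<^sub>R ?e) powr (-3/4 - of_nat 1) * (2 * (pv \<alpha> g \<xi> \<bullet> ?e)) * pv \<alpha> g (\<xi> + 0 *\<^sub>R ?e) $ k
       + qf \<alpha> g (\<xi> + 0 *\<^sub>R ?e) powr (-3/4) * pv \<alpha> g ?e $ k)) (at 0)"
    using DERIV_cmult[OF DERIV_mult[OF d1 pv_line_deriv[of \<alpha> g \<xi> ?e k]], of "1/2"]
    by (simp add: algebra_simps)
  let ?S = "{s::real. \<xi> + s *\<^sub>R ?e \<noteq> 0}"
  have oS: "open ?S"
    by (rule open_Collect_neq) (auto intro!: continuous_intros)
  have d3: "((\<lambda>s. partial_deriv k (\<lambda>\<xi>. qf \<alpha> g \<xi> powr (1/4)) (\<xi> + s *\<^sub>R ?e)) has_real_derivative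
     (1/2) * ((-3/4) * qf \<alpha> g (\<xi> + 0 *\<^sub>R ?e) powr (-3/4 - of_nat 1) * (2 * (pv \<alpha> g \<xi> \<bullet> ?e)) * pv \<alpha> g (\<xi> + 0 *\<^sub>R ?e) $ k
       + qf \<alpha> g (\<xi> + 0 *\<^sub>R ?e) powr (-3/4) * pv \<alpha> g ?e $ k)) (at 0)"
    by (rule has_field_derivative_transform_within_open[OF d2 oS]) (use assms in \<open>auto simp: pd1\<close>)
  show ?thesis unfolding partial_deriv_def[of j]
    by (rule DERIV_imp_deriv) (use d3 in \<open>simp add: inner_axis algebra_simps\<close>)
qed


lemma outer_mvec: "(outer u w :: real^'n::finite^'n) *v x = (w \<bullet> x) *\<^sub>R u"
  by (simp add: outer_def matrix_vector_mult_def vec_eq_iff inner_vec_def sum_distrib_left mult_ac)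

lemma mat_outer: "(A :: real^'n::finite^'n) ** outer u w = outer (A *v u) w"
  by (simp add: outer_def matrix_matrix_mult_def matrix_vector_mult_def vec_eq_iff sum_distrib_right sum_distrib_left mult_ac)

lemma outer_scale: "c *\<^sub>R outer u w = outer (c *\<^sub>R u) w"
  by (simp add: outer_def vec_eq_iff)

lemma det_scale: "det (c *\<^sub>R (A :: real^'n::finite^'n)) = c ^ CARD('n) * det A"
proof -
  have "c *\<^sub>R A = (\<chi> i. c *s (A $ i))" by (simp add: vec_eq_iff)
  then show ?thesis using det_rows_mul[of "\<lambda>i. c" "\<lambda>i. A $ i"] by simp
qed

definition Bm :: "real \<Rightarrow> real^'n::finite \<Rightarrow> real^'n^'n" where
  "Bm \<alpha> g = (\<chi> j k. pv \<alpha> g (axis j 1) $ k)"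

lemma Bm_eq: fixes g :: "real^'n::finite" shows "Bm \<alpha> g = \<alpha>\<^sup>2 *\<^sub>R ((1 + (norm g)\<^sup>2) *\<^sub>R mat 1 - outer g g)"
proof -
  have ax: "axis j (1::real) $ k = (if k = j then 1 else 0)" for j k :: 'n by (simp add: axis_def)
  show ?thesis
    by (simp add: Bm_def pv_def outer_def vec_eq_iff mat_def inner_axis' ax mult_ac)
qed

lemma Bm_vec: "Bm \<alpha> g *v \<xi> = pv \<alpha> g \<xi>"
proof -
  have sv: "(c *\<^sub>R A) *v x = c *\<^sub>R (A *v x)" for c and A :: "real^'n^'n" and x
    by (simp add: vec_eq_iff matrix_vector_mult_def sum_distrib_left mult_ac)
  show ?thesis unfolding Bm_eq pv_def
    by (simp add: sv matrix_vector_mult_diff_rdistrib outer_mvec inner_commute)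
qed


lemma hess_eq:
  fixes \<xi> :: "real^'n::finite"
  assumes "\<xi> \<noteq> 0" "\<alpha> \<noteq> 0"
  shows "hessian (\<lambda>\<xi>. qf \<alpha> g \<xi> powr (1/4)) \<xi> =
    (qf \<alpha> g \<xi> powr (-3/4) / 2) *\<^sub>R (Bm \<alpha> g - (3/(2 * qf \<alpha> g \<xi>)) *\<^sub>R outer (pv \<alpha> g \<xi>) (pv \<alpha> g \<xi>))"
proof -
  let ?q = "qf \<alpha> g \<xi>"
  have q: "?q > 0" using qf_pos[OF assms] .
  have h: "?q powr (-(7/4)) = ?q powr (-(3/4)) / ?q"
    using powr_diff[of ?q "-(3/4)" 1] q by simp
  show ?thesis
    by (simp add: vec_eq_iff hessian_def pd2[OF assms] Bm_def outer_def h field_simps)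
qed

lemma aux_h:
  fixes g :: "real^'n::finite"
  assumes "h > 0"
  shows "h *\<^sub>R mat 1 - outer g g = h *\<^sub>R (mat 1 + outer (-(1/h) *\<^sub>R g) g)"
proof -
  show ?thesis using assms by (simp add: outer_def vec_eq_iff mat_def field_simps)
qed

lemma det_Bm:
  fixes g :: "real^'n::finite"
  shows "det (Bm \<alpha> g) = (\<alpha>\<^sup>2)^CARD('n) * (1 + (norm g)\<^sup>2)^CARD('n) * (1 - (norm g)\<^sup>2 / (1 + (norm g)\<^sup>2))"
proof -
  let ?h = "1 + (norm g)\<^sup>2"
  have hp: "?h > 0" by (simp add: add_pos_nonneg)
  have "?h *\<^sub>R mat 1 - outer g g = ?h *\<^sub>R (mat 1 + outer (-(1/?h) *\<^sub>R g) g)"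
    using aux_h[OF hp] .
  then have "Bm \<alpha> g = \<alpha>\<^sup>2 *\<^sub>R (?h *\<^sub>R (mat 1 + outer (-(1/?h) *\<^sub>R g) g))"
    by (simp add: Bm_eq)
  then show ?thesis
    by (simp add: det_scale det_rank_one power2_norm_eq_inner power_mult_distrib)
qed

lemma det_H:
  fixes \<xi> :: "real^'n::finite"
  assumes "\<xi> \<noteq> 0" "\<alpha> \<noteq> 0"
  shows "det (hessian (\<lambda>\<xi>. qf \<alpha> g \<xi> powr (1/4)) \<xi>) =
    (qf \<alpha> g \<xi> powr (-3/4) / 2) ^ CARD('n) * det (Bm \<alpha> g) * (-1/2)"
proof -
  let ?q = "qf \<alpha> g \<xi>" and ?p = "pv \<alpha> g \<xi>"
  let ?c = "3/(2 * ?q)"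
  have q: "?q > 0" using qf_pos[OF assms] .
  have sv: "A *v (c *\<^sub>R x) = c *\<^sub>R (A *v x)" for c and A :: "real^'n^'n" and x
    by (simp add: vec_eq_iff matrix_vector_mult_def sum_distrib_left mult_ac)
  have bv: "Bm \<alpha> g *v ((-?c) *\<^sub>R \<xi>) = (-?c) *\<^sub>R ?p"
    by (simp only: sv Bm_vec)
  have "Bm \<alpha> g - ?c *\<^sub>R outer ?p ?p = Bm \<alpha> g ** (mat 1 + outer ((-?c) *\<^sub>R \<xi>) ?p)"
    unfolding matrix_add_ldistrib mat_outer bv by (simp add: outer_def vec_eq_iff)
  then have "det (Bm \<alpha> g - ?c *\<^sub>R outer ?p ?p) = det (Bm \<alpha> g) * (1 + (-?c *\<^sub>R \<xi>) \<bullet> ?p)"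
    by (simp add: det_mul det_rank_one)
  also have "(-?c *\<^sub>R \<xi>) \<bullet> ?p = -?c * ?q" by (simp add: qf_inner)
  also have "1 + -?c * ?q = -1/2" using q by simp
  finally show ?thesis
    by (simp add: hess_eq[OF assms] det_scale)
qed


lemma bound:
  fixes \<xi> g :: "real^'n::finite"
  assumes c: "c > 0" "c \<le> \<alpha>" and aM: "\<bar>\<alpha>\<bar> \<le> M" and gM: "norm g \<le> M"
    and xi: "1/2 \<le> norm \<xi>" "norm \<xi> \<le> 2"
  shows "((4 * (1 + M\<^sup>2) * (1 + M\<^sup>2)) powr (-(3/4)) / 2) ^ CARD('n) * (c\<^sup>2) ^ CARD('n) * (1/2)
     \<le> \<bar>det (hessian (\<lambda>\<xi>. qf \<alpha> g \<xi> powr (1/4)) \<xi>)\<bar>"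
proof -
  let ?K = "4 * (1 + M\<^sup>2) * (1 + M\<^sup>2)"
  let ?d = "CARD('n)"
  let ?q = "qf \<alpha> g \<xi>"
  let ?h = "(norm g)\<^sup>2"
  have xn: "\<xi> \<noteq> 0" using xi by auto
  have an: "\<alpha> \<noteq> 0" using c by auto
  have q: "?q > 0" using qf_pos[OF xn an] .
  have "(\<xi> \<bullet> g)\<^sup>2 \<ge> 0" by simp
  then have "?q \<le> \<alpha>\<^sup>2 * ((1 + ?h) * (norm \<xi>)\<^sup>2)"
    unfolding qf_def by (simp add: mult_left_mono)
  also have "\<dots> \<le> (1 + M\<^sup>2) * ((1 + M\<^sup>2) * 4)"
  proof (rule mult_mono)
    have "\<alpha>\<^sup>2 \<le> M\<^sup>2" using aM by (metis abs_ge_zero order_trans power2_abs power_mono)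
    then show "\<alpha>\<^sup>2 \<le> 1 + M\<^sup>2" by simp
    have "?h \<le> M\<^sup>2" using gM by (simp add: power_mono)
    moreover have "(norm \<xi>)\<^sup>2 \<le> 4" using xi power_mono[of "norm \<xi>" 2 2] by simp
    ultimately show "(1 + ?h) * (norm \<xi>)\<^sup>2 \<le> (1 + M\<^sup>2) * 4"
      by (intro mult_mono) auto
  qed auto
  finally have qK: "?q \<le> ?K" by (simp add: mult_ac)
  have p1: "?K powr (-(3/4)) \<le> ?q powr (-(3/4))"
    by (rule powr_mono2'[OF _ q qK]) simp
  have p2: "(?K powr (-(3/4)) / 2) ^ ?d \<le> (?q powr (-(3/4)) / 2) ^ ?d"
    by (rule power_mono) (use p1 in auto)
  have hp: "1 + ?h > 0" by (simp add: add_pos_nonneg)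
  have "(1 + ?h) ^ 1 \<le> (1 + ?h) ^ ?d"
    by (rule power_increasing) (auto simp: Suc_leI)
  then have hh: "1 \<le> (1 + ?h) ^ ?d * (1 - ?h / (1 + ?h))"
    using hp by (simp add: field_simps)
  have "(c\<^sup>2) ^ ?d \<le> (\<alpha>\<^sup>2) ^ ?d"
    by (intro power_mono) (use c in \<open>auto intro: power_mono\<close>)
  also have "\<dots> \<le> (\<alpha>\<^sup>2) ^ ?d * ((1 + ?h) ^ ?d * (1 - ?h / (1 + ?h)))"
    using hh by (simp add: mult_le_cancel_left1)
  finally have dB: "(c\<^sup>2) ^ ?d \<le> det (Bm \<alpha> g)"
    by (simp add: det_Bm mult_ac)
  have "(?K powr (-(3/4)) / 2) ^ ?d * (c\<^sup>2) ^ ?d \<le> (?q powr (-(3/4)) / 2) ^ ?d * det (Bm \<alpha> g)"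
    by (rule mult_mono[OF p2 dB]) auto
  moreover have "\<bar>det (hessian (\<lambda>\<xi>. qf \<alpha> g \<xi> powr (1/4)) \<xi>)\<bar> = (?q powr (-(3/4)) / 2) ^ ?d * det (Bm \<alpha> g) * (1/2)"
  proof -
    have "0 \<le> (c\<^sup>2) ^ ?d" by simp
    then have "det (Bm \<alpha> g) \<ge> 0" using dB by linarith
    then show ?thesis by (simp add: det_H[OF xn an] abs_mult)
  qed
  ultimately show ?thesis by simp
qed

theorem corollary3p7:
  fixes I :: "real set" and a \<eta> :: "real \<Rightarrow> real^'d::finite \<Rightarrow> real" and c M :: real
  assumes "is_interval I"
    and "\<forall>t\<in>I. \<forall>x. \<eta> t differentiable (at x)"
    and "\<forall>t\<in>I. \<forall>x. norm (grad (\<eta> t) x) \<le> M"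
    and "\<forall>t\<in>I. \<forall>x. \<bar>a t x\<bar> \<le> M"
    and "c > 0"
    and "\<forall>t\<in>I. \<forall>x. a t x \<ge> c"
  shows "\<exists>c0>0. \<forall>t\<in>I. \<forall>x. \<forall>\<xi>::real^'d. 1/2 \<le> norm \<xi> \<and> norm \<xi> \<le> 2 \<longrightarrow>
            \<bar>det (hessian (gamma_sym a \<eta> t x) \<xi>)\<bar> \<ge> c0"
proof -
  let ?c0 = "((4 * (1 + M\<^sup>2) * (1 + M\<^sup>2)) powr (-(3/4)) / 2) ^ CARD('d) * (c\<^sup>2) ^ CARD('d) * (1/2)"
  have K: "4 * (1 + M\<^sup>2) * (1 + M\<^sup>2) > 0" by (simp add: add_pos_nonneg)
  have pos: "?c0 > 0" using K assms(5) by (intro mult_pos_pos zero_less_power divide_pos_pos) auto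
  have g: "gamma_sym a \<eta> t x = (\<lambda>\<xi>. qf (a t x) (grad (\<eta> t) x) \<xi> powr (1/4))" for t x
    by (simp add: fun_eq_iff gamma_sym_def U_sym_def qf_def)
  show ?thesis
  proof (intro exI[of _ ?c0] conjI pos ballI allI impI)
    fix t x and \<xi> :: "real^'d"
    assume t: "t \<in> I" and xi: "1/2 \<le> norm \<xi> \<and> norm \<xi> \<le> 2"
    show "?c0 \<le> \<bar>det (hessian (gamma_sym a \<eta> t x) \<xi>)\<bar>"
      unfolding g
      by (rule bound) (use assms t xi in auto)
  qed
qed

end
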